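(* Let $k$ be a field and let $d,m$ be integers with $d$ even, $d\ge 4$ and $d<m-1$. Set $a=(d+2)/2$, $R=k[x_1,\dots,x_m,z]$, $I=(I_{a,1,m-1},I_{a,2,m})$ and $J=(I_{a-1,2,m-1},\, z\,I_{a-2,3,m-2})$, ideals of $R$ with $I\subset J$. (a) For all $v\in I_{a-1,2,m-1}$ and $w\in I_{a-2,3,m-2}$ we have $x_1x_m v w=0$ in $R/I$. (b) Let $b\in J$ be an element whose image in $R/I$ is $R/I$-regular, and write its image as $b=b_1+z b_2$ with $b_1$ in the ideal of $R/I$ generated by $I_{a-1,2,m-1}$ and $b_2$ in the ideal of $R/I$ generated by $I_{a-2,3,m-2}$. Let $s_0=b_2x_1x_m/b\in K(R/I)$, where $K(R/I)$ is the total quotient ring of $R/I$. Then $s_0 z w = w x_1x_m$ in $K(R/I)$ for all $w\in I_{a-2,3,m-2}$.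
   Context: For positive integers $a,p,q$ with $p<q$ and $2a\le q-p+2$, $I_{a,p,q}$ denotes the ideal (of any polynomial ring containing $x_p,\dots,x_q$) generated by all monomials $x_{t_1}\cdots x_{t_a}$ with $p\le t_1$, $t_a\le q$ and $t_j+2\le t_{j+1}$ for $1\le j\le a-1$. The total quotient ring of a ring is its localization at the multiplicative set of non-zero-divisors. *)

theory Defs
  imports "HOL-Library.Poly_Mapping"
begin

(* Polynomials over a field k in variables indexed by nat:
  type (nat \<Rightarrow>\<^sub>0 nat) \<Rightarrow>\<^sub>0 'k (monomials = exponent vectors).
  Convention: variable 0 is z, variable i (1 \<le> i \<le> m) is x_i. *)

type_synonym 'k mpoly = "(nat \<Rightarrow>\<^sub>0 nat) \<Rightarrow>\<^sub>0 'k"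

definition pvar :: "nat \<Rightarrow> 'k::field mpoly" where
  "pvar i = Poly_Mapping.single (Poly_Mapping.single i 1) 1"

(* The polynomial ring R = k[z, x_1, ..., x_m] as the set of polynomials
  only involving the variables 0..m. *)
definition polyR :: "nat \<Rightarrow> 'k::field mpoly set" where
  "polyR m = {p. \<forall>mon \<in> Poly_Mapping.keys p. Poly_Mapping.keys mon \<subseteq> {0..m}}"

inductive_set gen_ideal :: "'a::comm_ring_1 set \<Rightarrow> 'a set \<Rightarrow> 'a set"
  for S G where
    zero: "0 \<in> gen_ideal S G"
  | comb: "r \<in> S \<Longrightarrow> g \<in> G \<Longrightarrow> p \<in> gen_ideal S G \<Longrightarrow> r * g + p \<in> gen_ideal S G"

(* Generators of I_{a,p,q}: monomials x_{t_1}...x_{t_a} with p \<le> t_1,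
  t_a \<le> q, t_j + 2 \<le> t_{j+1} (indices shifted to 0..a-1). *)
definition gensI :: "nat \<Rightarrow> nat \<Rightarrow> nat \<Rightarrow> 'k::field mpoly set" where
  "gensI a p q = {(\<Prod>j<a. pvar (t j)) | t.
      p \<le> t 0 \<and> t (a - 1) \<le> q \<and> (\<forall>j. j + 1 < a \<longrightarrow> t j + 2 \<le> t (j + 1))}"

definition idealI :: "nat \<Rightarrow> nat \<Rightarrow> nat \<Rightarrow> nat \<Rightarrow> 'k::field mpoly set" where
  "idealI m a p q = gen_ideal (polyR m) (gensI a p q)"

definition regular_mod :: "'a::comm_ring_1 set \<Rightarrow> 'a set \<Rightarrow> 'a \<Rightarrow> bool" where
  "regular_mod S I b \<longleftrightarrow> b \<in> S \<and> (\<forall>c\<in>S. b * c \<in> I \<longrightarrow> c \<in> I)"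

(* Total quotient ring K(R/I): its elements are fractions a/s with a, s \<in> R
  and s regular in R/I, represented by pairs (a, s); the standard localization
  equality, multiplication and canonical map are written out below. *)
definition tq_frac :: "'a::comm_ring_1 \<Rightarrow> 'a \<Rightarrow> 'a \<times> 'a" where
  "tq_frac a s = (a, s)"

definition tq_of :: "'a::comm_ring_1 \<Rightarrow> 'a \<times> 'a" where
  "tq_of a = (a, 1)"

definition tq_mult :: "'a::comm_ring_1 \<times> 'a \<Rightarrow> 'a \<times> 'a \<Rightarrow> 'a \<times> 'a" where
  "tq_mult x y = (fst x * fst y, snd x * snd y)"

definition tq_eq :: "'a::comm_ring_1 set \<Rightarrow> 'a set \<Rightarrow> 'a \<times> 'a \<Rightarrow> 'a \<times> 'a \<Rightarrow> bool" where
  "tq_eq S I x y \<longleftrightarrow>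
     (\<exists>u. regular_mod S I u \<and> u * (fst x * snd y - fst y * snd x) \<in> I)"

end

theory Submission imports Defs begin

lemma polyR_iff: "p \<in> polyR m \<longleftrightarrow> (\<forall>mon \<in> Poly_Mapping.keys p. \<forall>i \<in> Poly_Mapping.keys mon. i \<le> m)"
  unfolding polyR_def by (auto simp: subset_iff)

lemma polyR_add: "p \<in> polyR m \<Longrightarrow> q \<in> polyR m \<Longrightarrow> p + q \<in> polyR m"
  unfolding polyR_iff
proof (intro ballI)
  fix mon i assume p: "\<forall>mon \<in> Poly_Mapping.keys p. \<forall>i \<in> Poly_Mapping.keys mon. i \<le> m"
    and q: "\<forall>mon \<in> Poly_Mapping.keys q. \<forall>i \<in> Poly_Mapping.keys mon. i \<le> m"
    and mon: "mon \<in> Poly_Mapping.keys (p + q)" and i: "i \<in> Poly_Mapping.keys mon"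
  have "mon \<in> Poly_Mapping.keys p \<or> mon \<in> Poly_Mapping.keys q" using keys_add[of p q] mon by (rule subsetD[THEN UnE]) auto
  then show "i \<le> m" using p q i by metis
qed

lemma polyR_mult: "p \<in> polyR m \<Longrightarrow> q \<in> polyR m \<Longrightarrow> p * q \<in> polyR m"
  unfolding polyR_iff
proof (intro ballI)
  fix mon i assume p: "\<forall>mon \<in> Poly_Mapping.keys p. \<forall>i \<in> Poly_Mapping.keys mon. i \<le> m"
    and q: "\<forall>mon \<in> Poly_Mapping.keys q. \<forall>i \<in> Poly_Mapping.keys mon. i \<le> m"
    and mon: "mon \<in> Poly_Mapping.keys (p * q)" and i: "i \<in> Poly_Mapping.keys mon"
  obtain a b where ab: "mon = a + b" "a \<in> Poly_Mapping.keys p" "b \<in> Poly_Mapping.keys q"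
    using keys_mult[of p q] mon by (rule subsetD[THEN CollectE]) auto
  have "i \<in> Poly_Mapping.keys a \<or> i \<in> Poly_Mapping.keys b"
    using subsetD[OF keys_add[of a b]] i ab(1) by simp
  then show "i \<le> m" using p q ab by metis
qed

lemma polyR_uminus: "p \<in> polyR m \<Longrightarrow> - p \<in> polyR m"
  unfolding polyR_iff by simp

lemma polyR_zero: "0 \<in> polyR m" unfolding polyR_def by simp
lemma polyR_one: "1 \<in> polyR m" unfolding polyR_def by simp

lemma pvar_polyR: "i \<le> m \<Longrightarrow> (pvar i :: 'k::field mpoly) \<in> polyR m"
  unfolding polyR_def pvar_def by simp

lemma polyR_prod: "(\<And>i. i \<in> A \<Longrightarrow> f i \<in> polyR m) \<Longrightarrow> prod f A \<in> polyR m"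
proof (induction A rule: infinite_finite_induct)
  case (infinite A) then show ?case by (simp add: polyR_one)
next
  case empty then show ?case by (simp add: polyR_one)
next
  case (insert x F) then show ?case by (simp add: polyR_mult)
qed

lemma gen_ideal_add: "p \<in> gen_ideal S G \<Longrightarrow> q \<in> gen_ideal S G \<Longrightarrow> p + q \<in> gen_ideal S G"
proof (induction p rule: gen_ideal.induct)
  case zero then show ?case by simp
next
  case (comb r g p)
  have "r * g + p + q = r * g + (p + q)" by (simp add: add.assoc)
  then show ?case using comb gen_ideal.comb by metis
qed

lemma gen_ideal_mult:
  assumes "\<And>a b. a \<in> S \<Longrightarrow> b \<in> S \<Longrightarrow> a * b \<in> S" "s \<in> S"
  shows "p \<in> gen_ideal S G \<Longrightarrow> s * p \<in> gen_ideal S G"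
proof (induction p rule: gen_ideal.induct)
  case zero then show ?case by (simp add: gen_ideal.zero)
next
  case (comb r g p)
  have "s * (r * g + p) = (s * r) * g + s * p" by (simp add: algebra_simps)
  moreover have "s * r \<in> S" using assms comb by blast
  ultimately show ?case using comb gen_ideal.comb by metis
qed

lemma gen_ideal_gen: "r \<in> S \<Longrightarrow> g \<in> G \<Longrightarrow> r * g \<in> gen_ideal S G"
  using gen_ideal.comb[OF _ _ gen_ideal.zero] by fastforce

lemma gen_ideal_mono:
  assumes "\<And>a b. a \<in> S \<Longrightarrow> b \<in> S \<Longrightarrow> a * b \<in> S" "\<And>g. g \<in> G \<Longrightarrow> g \<in> gen_ideal S H"
  shows "p \<in> gen_ideal S G \<Longrightarrow> p \<in> gen_ideal S H"
proof (induction p rule: gen_ideal.induct)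
  case zero then show ?case by (simp add: gen_ideal.zero)
next
  case (comb r g p)
  have "r * g \<in> gen_ideal S H" using gen_ideal_mult[OF assms(1)] assms(2) comb by blast
  then show ?case using gen_ideal_add comb by blast
qed

lemma gen_ideal_sub:
  assumes "\<And>a b. a \<in> S \<Longrightarrow> b \<in> S \<Longrightarrow> a * b \<in> S" "\<And>a b. a \<in> S \<Longrightarrow> b \<in> S \<Longrightarrow> a + b \<in> S"
    "0 \<in> S" "\<And>g. g \<in> G \<Longrightarrow> g \<in> S"
  shows "p \<in> gen_ideal S G \<Longrightarrow> p \<in> S"
proof (induction p rule: gen_ideal.induct)
  case zero then show ?case using assms(3) .
next
  case (comb r g p)
  then show ?case using assms(1,2,4) by metis
qed

lemma gen_ideal_uminus:
  assumes "\<And>a. a \<in> S \<Longrightarrow> - a \<in> S"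
  shows "p \<in> gen_ideal S G \<Longrightarrow> - p \<in> gen_ideal S G"
proof (induction p rule: gen_ideal.induct)
  case zero then show ?case by (simp add: gen_ideal.zero)
next
  case (comb r g p)
  have "- (r * g + p) = (- r) * g + (- p)" by simp
  moreover have "- r \<in> S" using assms comb by blast
  ultimately show ?case using comb gen_ideal.comb by metis
qed

lemma gen_ideal_diff:
  assumes "\<And>a. a \<in> S \<Longrightarrow> - a \<in> S"
  shows "p \<in> gen_ideal S G \<Longrightarrow> q \<in> gen_ideal S G \<Longrightarrow> p - q \<in> gen_ideal S G"
  using gen_ideal_add[of p S G "-q"] gen_ideal_uminus[OF assms, of q G] by simp


lemma spaced_mono:
  assumes "\<And>j. j + 1 < n \<Longrightarrow> t j + 2 \<le> (t (j + 1) :: nat)"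
  shows "i \<le> j \<Longrightarrow> j < n \<Longrightarrow> t i + 2 * (j - i) \<le> t j"
proof (induction j)
  case 0 then show ?case by simp
next
  case (Suc j)
  show ?case
  proof (cases "i = Suc j")
    case True then show ?thesis by simp
  next
    case False
    then have "i \<le> j" using Suc by simp
    then have "t i + 2 * (j - i) \<le> t j" using Suc by simp
    moreover have "t j + 2 \<le> t (Suc j)" using assms[of j] Suc by simp
    ultimately show ?thesis using \<open>i \<le> j\<close> by (simp add: Suc_diff_le)
  qed
qed

lemma exists_k:
  fixes T S :: "nat \<Rightarrow> nat"
  assumes a: "2 \<le> a" "2 * a \<le> m" and T0: "T 0 = 1" and Ta: "T (a - 1) = m"
  shows "\<exists>k. (k \<le> a - 2 \<and> T k + 2 \<le> S k) \<or> (1 \<le> k \<and> k \<le> a - 1 \<and> S (k - 1) + 2 \<le> T k)"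
proof (rule ccontr)
  assume "\<not> ?thesis"
  then have c1: "\<And>k. k \<le> a - 2 \<Longrightarrow> S k \<le> T k + 1" and c2: "\<And>k. 1 \<le> k \<Longrightarrow> k \<le> a - 1 \<Longrightarrow> T k \<le> S (k - 1) + 1"
    by force+
  have "j \<le> a - 1 \<Longrightarrow> T j \<le> 2 * j + 1" for j
  proof (induction j)
    case 0 then show ?case using T0 by simp
  next
    case (Suc j)
    have "T (Suc j) \<le> S j + 1" using c2[of "Suc j"] Suc.prems by simp
    also have "\<dots> \<le> T j + 2" using c1[of j] Suc.prems by simp
    finally show ?case using Suc by simp
  qed
  from this[of "a - 1"] Ta a show False by simp
qed


lemma prod_split:
  fixes g :: "nat \<Rightarrow> 'a::comm_monoid_mult"
  shows "k \<le> n \<Longrightarrow> (\<Prod>j<n. g j) = (\<Prod>j\<in>{0..<k}. g j) * (\<Prod>j\<in>{k..<n}. g j)"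
  by (simp add: prod.atLeastLessThan_concat atLeast0LessThan[symmetric])

lemma core:
  fixes T S :: "nat \<Rightarrow> nat"
  assumes a: "2 \<le> a" "2 * a \<le> m" and T0: "T 0 = 1" and Ta: "T (a - 1) = m"
    and Tsp: "\<And>j. j + 1 < a \<Longrightarrow> T j + 2 \<le> T (j + 1)"
    and Ssp: "\<And>j. j + 1 < a - 1 \<Longrightarrow> S j + 2 \<le> S (j + 1)"
    and S0: "2 \<le> S 0" and Sa: "S (a - 2) \<le> m - 1"
  shows "(\<Prod>j<a. pvar (T j)) * (\<Prod>j<a - 1. pvar (S j))
     \<in> gen_ideal (polyR m) (gensI a 1 (m - 1) \<union> gensI a 2 m :: 'k::field mpoly set)"
proof -
  have Tb: "T j \<le> m" if "j < a" for j
  proof -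
    have "j \<le> a - 1" using that by simp
    then show ?thesis using spaced_mono[of a T j "a - 1", OF Tsp] that Ta by simp
  qed
  have Sb: "S j \<le> m - 1" if "j < a - 1" for j
  proof -
    have "j \<le> a - 2" "a - 2 < a - 1" using that a by auto
    then show ?thesis using spaced_mono[of "a - 1" S j "a - 2", OF Ssp] that Sa by simp
  qed
  have pT: "(\<Prod>j\<in>A. pvar (T j) :: 'k mpoly) \<in> polyR m" if "A \<subseteq> {..<a}" for A
  proof (rule polyR_prod)
    fix j assume "j \<in> A" then have "T j \<le> m" using that Tb by blast
    then show "pvar (T j) \<in> polyR m" by (rule pvar_polyR)
  qed
  have pS: "(\<Prod>j\<in>A. pvar (S j) :: 'k mpoly) \<in> polyR m" if "A \<subseteq> {..<a-1}" for A
  proof (rule polyR_prod)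
    fix j assume "j \<in> A" then have "S j \<le> m" using that Sb by fastforce
    then show "pvar (S j) \<in> polyR m" by (rule pvar_polyR)
  qed
  obtain k where k: "(k \<le> a - 2 \<and> T k + 2 \<le> S k) \<or> (1 \<le> k \<and> k \<le> a - 1 \<and> S (k - 1) + 2 \<le> T k)"
    using exists_k[OF a T0 Ta] by blast
  then show ?thesis
  proof
    assume k: "k \<le> a - 2 \<and> T k + 2 \<le> S k"
    define f where "f j = (if j \<le> k then T j else S (j - 1))" for j
    have g: "(\<Prod>j<a. pvar (f j) :: 'k mpoly) \<in> gensI a 1 (m - 1)"
      unfolding gensI_def
    proof (intro CollectI exI conjI allI impI)
      show "1 \<le> f 0" using T0 by (simp add: f_def)
      have "\<not> a - 1 \<le> k" using k a by arith
      then show "f (a - 1) \<le> m - 1" using Sa by (simp add: f_def numeral_2_eq_2)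
      fix j assume j: "j + 1 < a"
      show "f j + 2 \<le> f (j + 1)"
      proof (cases "j + 1 \<le> k")
        case True then show ?thesis using Tsp[OF j] by (simp add: f_def)
      next
        case False
        show ?thesis
        proof (cases "j = k")
          case True then show ?thesis using k by (simp add: f_def)
        next
          case False
          then have "j > k" "(j - 1) + 1 < a - 1" using \<open>\<not> j + 1 \<le> k\<close> j by auto
          then show ?thesis using Ssp[of "j - 1"] by (simp add: f_def)
        qed
      qed
    qed simp
    have e1: "(\<Prod>j<a. pvar (f j) :: 'k mpoly) = (\<Prod>j\<in>{0..<Suc k}. pvar (T j)) * (\<Prod>j\<in>{k..<a-1}. pvar (S j))"
    proof -
      have "(\<Prod>j<a. pvar (f j) :: 'k mpoly) = (\<Prod>j\<in>{0..<Suc k}. pvar (f j)) * (\<Prod>j\<in>{Suc k..<a}. pvar (f j))"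
        using k a by (intro prod_split) arith
      moreover have "(\<Prod>j\<in>{0..<Suc k}. pvar (f j) :: 'k mpoly) = (\<Prod>j\<in>{0..<Suc k}. pvar (T j))"
        by (rule prod.cong) (auto simp: f_def)
      moreover have "(\<Prod>j\<in>{Suc k..<a}. pvar (f j) :: 'k mpoly) = (\<Prod>j\<in>{Suc k..<a}. pvar (S (j - 1)))"
        by (rule prod.cong) (auto simp: f_def)
      moreover have "(\<Prod>j\<in>{Suc k..<a}. pvar (S (j - 1)) :: 'k mpoly) = (\<Prod>j\<in>{k..<a-1}. pvar (S j))"
        using prod.shift_bounds_nat_ivl[of "\<lambda>j. pvar (S (j - 1)) :: 'k mpoly" k 1 "a - 1"] a by simp
      ultimately show ?thesis by simp
    qed
    have e2: "(\<Prod>j<a. pvar (T j) :: 'k mpoly) = (\<Prod>j\<in>{0..<Suc k}. pvar (T j)) * (\<Prod>j\<in>{Suc k..<a}. pvar (T j))"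
      using k a by (intro prod_split) arith
    have e3: "(\<Prod>j<a-1. pvar (S j) :: 'k mpoly) = (\<Prod>j\<in>{0..<k}. pvar (S j)) * (\<Prod>j\<in>{k..<a-1}. pvar (S j))"
      using k a by (intro prod_split) arith
    have r: "(\<Prod>j\<in>{Suc k..<a}. pvar (T j)) * (\<Prod>j\<in>{0..<k}. pvar (S j)) \<in> (polyR m :: 'k mpoly set)"
      using k a by (intro polyR_mult pT pS) (auto simp: subset_iff)
    have "(\<Prod>j<a. pvar (T j)) * (\<Prod>j<a - 1. pvar (S j)) =
       ((\<Prod>j\<in>{Suc k..<a}. pvar (T j)) * (\<Prod>j\<in>{0..<k}. pvar (S j))) * (\<Prod>j<a. pvar (f j) :: 'k mpoly)"
      unfolding e1 e2 e3 by (simp only: mult_ac)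
    then show ?thesis using gen_ideal_gen[OF r, of _ "gensI a 1 (m - 1) \<union> gensI a 2 m"] g by simp
  next
    assume k: "1 \<le> k \<and> k \<le> a - 1 \<and> S (k - 1) + 2 \<le> T k"
    define f where "f j = (if j < k then S j else T j)" for j
    have g: "(\<Prod>j<a. pvar (f j) :: 'k mpoly) \<in> gensI a 2 m"
      unfolding gensI_def
    proof (intro CollectI exI conjI allI impI)
      show "2 \<le> f 0" using S0 k by (simp add: f_def)
      show "f (a - 1) \<le> m" using k a Ta by (simp add: f_def)
      fix j assume j: "j + 1 < a"
      show "f j + 2 \<le> f (j + 1)"
      proof (cases "j + 1 < k")
        case True then show ?thesis using Ssp[of j] k by (simp add: f_def)
      next
        case False
        show ?thesis
        proof (cases "j + 1 = k")
          case True then have "j = k - 1" by simp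
          then show ?thesis using k True by (simp add: f_def)
        next
          case False
          then show ?thesis using Tsp[OF j] \<open>\<not> j + 1 < k\<close> by (simp add: f_def)
        qed
      qed
    qed simp
    have e1: "(\<Prod>j<a. pvar (f j) :: 'k mpoly) = (\<Prod>j\<in>{0..<k}. pvar (S j)) * (\<Prod>j\<in>{k..<a}. pvar (T j))"
    proof -
      have "(\<Prod>j<a. pvar (f j) :: 'k mpoly) = (\<Prod>j\<in>{0..<k}. pvar (f j)) * (\<Prod>j\<in>{k..<a}. pvar (f j))"
        using k a by (intro prod_split) arith
      moreover have "(\<Prod>j\<in>{0..<k}. pvar (f j) :: 'k mpoly) = (\<Prod>j\<in>{0..<k}. pvar (S j))"
        by (rule prod.cong) (auto simp: f_def)
      moreover have "(\<Prod>j\<in>{k..<a}. pvar (f j) :: 'k mpoly) = (\<Prod>j\<in>{k..<a}. pvar (T j))"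
        by (rule prod.cong) (auto simp: f_def)
      ultimately show ?thesis by simp
    qed
    have e2: "(\<Prod>j<a. pvar (T j) :: 'k mpoly) = (\<Prod>j\<in>{0..<k}. pvar (T j)) * (\<Prod>j\<in>{k..<a}. pvar (T j))"
      using k a by (intro prod_split) arith
    have e3: "(\<Prod>j<a-1. pvar (S j) :: 'k mpoly) = (\<Prod>j\<in>{0..<k}. pvar (S j)) * (\<Prod>j\<in>{k..<a-1}. pvar (S j))"
      using k a by (intro prod_split) arith
    have r: "(\<Prod>j\<in>{0..<k}. pvar (T j)) * (\<Prod>j\<in>{k..<a-1}. pvar (S j)) \<in> (polyR m :: 'k mpoly set)"
      using k a by (intro polyR_mult pT pS) (auto simp: subset_iff)
    have "(\<Prod>j<a. pvar (T j)) * (\<Prod>j<a - 1. pvar (S j)) =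
       ((\<Prod>j\<in>{0..<k}. pvar (T j)) * (\<Prod>j\<in>{k..<a-1}. pvar (S j))) * (\<Prod>j<a. pvar (f j) :: 'k mpoly)"
      unfolding e1 e2 e3 by (simp only: mult_ac)
    then show ?thesis using gen_ideal_gen[OF r, of _ "gensI a 1 (m - 1) \<union> gensI a 2 m"] g by simp
  qed
qed


lemma gensI_mem: "g \<in> gensI a p q \<longleftrightarrow> (\<exists>t. g = (\<Prod>j<a. pvar (t j)) \<and> p \<le> t 0 \<and> t (a - 1) \<le> q \<and> (\<forall>j. j + 1 < a \<longrightarrow> t j + 2 \<le> t (j + 1)))"
  unfolding gensI_def by simp

lemma gensI_polyR:
  assumes "q \<le> m" "g \<in> gensI a p q"
  shows "g \<in> (polyR m :: 'k::field mpoly set)"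
proof -
  obtain t where g: "g = (\<Prod>j<a. pvar (t j))" and t: "t (a - 1) \<le> q"
    and sp: "\<And>j. j + 1 < a \<Longrightarrow> t j + 2 \<le> t (j + 1)"
    using assms(2) unfolding gensI_mem by blast
  show ?thesis unfolding g
  proof (rule polyR_prod)
    fix j assume j: "j \<in> {..<a}"
    then have "j \<le> a - 1" "a - 1 < a" by auto
    then have "t j \<le> t (a - 1)" using spaced_mono[of a t j "a - 1", OF sp] by simp
    then show "pvar (t j) \<in> polyR m" using t assms(1) by (intro pvar_polyR) simp
  qed
qed

lemma gen_ideal_bilin:
  assumes S: "\<And>a b. a \<in> S \<Longrightarrow> b \<in> S \<Longrightarrow> a * b \<in> S"
    and gh: "\<And>g h. g \<in> G \<Longrightarrow> h \<in> H \<Longrightarrow> c * g * h \<in> gen_ideal S K"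
  shows "p \<in> gen_ideal S G \<Longrightarrow> q \<in> gen_ideal S H \<Longrightarrow> c * p * q \<in> gen_ideal S K"
proof (induction p rule: gen_ideal.induct)
  case zero then show ?case by (simp add: gen_ideal.zero)
next
  case (comb r g p)
  have gq: "c * g * q \<in> gen_ideal S K" using comb.prems
  proof (induction q rule: gen_ideal.induct)
    case zero then show ?case by (simp add: gen_ideal.zero)
  next
    case (comb r' h q')
    have "c * g * (r' * h + q') = r' * (c * g * h) + c * g * q'" by (simp add: algebra_simps)
    moreover have "r' * (c * g * h) \<in> gen_ideal S K"
      using gen_ideal_mult[OF S] gh comb \<open>g \<in> G\<close> by blast
    ultimately show ?case using gen_ideal_add comb by metis
  qed
  have "c * (r * g + p) * q = r * (c * g * q) + c * p * q" by (simp add: algebra_simps)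
  moreover have "r * (c * g * q) \<in> gen_ideal S K" using gen_ideal_mult[OF S] gq comb by blast
  ultimately show ?case using gen_ideal_add comb by metis
qed

lemma part2_gen:
  assumes a: "3 \<le> a" "2 * a \<le> m"
    and g1: "g1 \<in> gensI (a - 1) 2 (m - 1)" and g2: "g2 \<in> gensI (a - 2) 3 (m - 2)"
  shows "pvar 1 * pvar m * g1 * g2
     \<in> gen_ideal (polyR m) (gensI a 1 (m - 1) \<union> gensI a 2 m :: 'k::field mpoly set)"
proof -
  obtain s where g1e: "g1 = (\<Prod>j<a-1. pvar (s j))" and s0: "2 \<le> s 0" and sa: "s (a - 1 - 1) \<le> m - 1"
    and ssp: "\<And>j. j + 1 < a - 1 \<Longrightarrow> s j + 2 \<le> s (j + 1)"
    using g1 unfolding gensI_mem by blast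
  obtain u where g2e: "g2 = (\<Prod>j<a-2. pvar (u j))" and u0: "3 \<le> u 0" and ua: "u (a - 2 - 1) \<le> m - 2"
    and usp: "\<And>j. j + 1 < a - 2 \<Longrightarrow> u j + 2 \<le> u (j + 1)"
    using g2 unfolding gensI_mem by blast
  define n where "n = a - 2"
  have n: "a = Suc (Suc n)" "1 \<le> n" using a by (simp_all add: n_def)
  define T where "T j = (if j = 0 then 1 else if j = Suc n then m else u (j - 1))" for j
  have "(\<Prod>j<a. pvar (T j) :: 'k mpoly) = pvar (T 0) * (\<Prod>j<n. pvar (T (Suc j))) * pvar (T (Suc n))"
    unfolding n prod.lessThan_Suc[of _ "Suc n"] prod.lessThan_Suc_shift[of _ n] ..
  also have "(\<Prod>j<n. pvar (T (Suc j)) :: 'k mpoly) = g2"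
    unfolding g2e n by (rule prod.cong) (auto simp: T_def)
  finally have eT: "(\<Prod>j<a. pvar (T j) :: 'k mpoly) = pvar 1 * pvar m * g2"
    by (simp add: T_def mult_ac)
  have T0: "T 0 = 1" and Ta: "T (a - 1) = m" by (simp_all add: T_def n)
  have Tsp: "T j + 2 \<le> T (j + 1)" if j: "j + 1 < a" for j
  proof -
    consider "j = 0" | "1 \<le> j" "j < n" | "j = n" using j n by linarith
    then show ?thesis
    proof cases
      case 1 then show ?thesis using u0 n by (simp add: T_def)
    next
      case 2
      have "u (j - 1) + 2 \<le> u (j - 1 + 1)" using usp[of "j - 1"] 2 n by simp
      then show ?thesis using 2 by (simp add: T_def)
    next
      case 3
      have "u (n - 1) \<le> m - 2" using ua n by simp
      then show ?thesis using 3 n a by (simp add: T_def)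
    qed
  qed
  have Sa: "s (a - 2) \<le> m - 1" using sa by (simp add: numeral_2_eq_2)
  have "(\<Prod>j<a. pvar (T j)) * (\<Prod>j<a - 1. pvar (s j))
     \<in> gen_ideal (polyR m) (gensI a 1 (m - 1) \<union> gensI a 2 m :: 'k::field mpoly set)"
    using a by (intro core T0 Ta Tsp ssp s0 Sa) auto
  moreover have "pvar 1 * pvar m * g1 * g2 = (\<Prod>j<a. pvar (T j)) * (\<Prod>j<a - 1. pvar (s j) :: 'k mpoly)"
    unfolding eT g1e by (simp only: mult_ac)
  ultimately show ?thesis by simp
qed


theorem lemma3p5:
  fixes d m :: nat
  assumes "even d" and "4 \<le> d" and "d < m - 1"
  defines "a \<equiv> (d + 2) div 2"
      and "R \<equiv> polyR m :: 'k::field mpoly set"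
      and "x \<equiv> (\<lambda>i. pvar i :: 'k mpoly)"
      and "z \<equiv> pvar 0 :: 'k mpoly"
  defines "I \<equiv> gen_ideal R (gensI a 1 (m - 1) \<union> gensI a 2 m)"
      and "J \<equiv> gen_ideal R (gensI (a - 1) 2 (m - 1) \<union> (\<lambda>g. z * g) ` gensI (a - 2) 3 (m - 2))"
  shows "I \<subseteq> J \<and>
    (\<forall>v \<in> idealI m (a - 1) 2 (m - 1). \<forall>w \<in> idealI m (a - 2) 3 (m - 2).
           x 1 * x m * v * w \<in> I) \<and>
    (\<forall>b b1 b2. b \<in> J \<and> regular_mod R I b \<and> b1 \<in> R \<and> b2 \<in> R
           \<and> (\<exists>v \<in> idealI m (a - 1) 2 (m - 1). b1 - v \<in> I)
           \<and> (\<exists>v \<in> idealI m (a - 2) 3 (m - 2). b2 - v \<in> I)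
           \<and> b - (b1 + z * b2) \<in> I \<longrightarrow>
         (\<forall>w \<in> idealI m (a - 2) 3 (m - 2).
            tq_eq R I (tq_mult (tq_frac (b2 * x 1 * x m) b) (tq_of (z * w)))
                      (tq_of (w * x 1 * x m))))"
proof -
  have a3: "3 \<le> a" and am: "2 * a \<le> m" using assms(1,2,3) unfolding a_def by (auto elim!: evenE)
  have Rmult: "\<And>p q. p \<in> R \<Longrightarrow> q \<in> R \<Longrightarrow> p * q \<in> R" unfolding R_def by (rule polyR_mult)
  have Radd: "\<And>p q. p \<in> R \<Longrightarrow> q \<in> R \<Longrightarrow> p + q \<in> R" unfolding R_def by (rule polyR_add)
  have Rneg: "\<And>p. p \<in> R \<Longrightarrow> - p \<in> R" unfolding R_def by (rule polyR_uminus)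
  have R0: "0 \<in> R" and R1: "1 \<in> R" unfolding R_def by (rule polyR_zero, rule polyR_one)
  have xR: "x i \<in> R" if "i \<le> m" for i unfolding x_def R_def using that by (rule pvar_polyR)
  have P1: "I \<subseteq> J"
  proof
    fix p assume pI: "p \<in> I"
    show "p \<in> J" unfolding J_def
    proof (rule gen_ideal_mono[OF Rmult _ pI[unfolded I_def]])
      fix g :: "'k mpoly" assume "g \<in> gensI a 1 (m - 1) \<union> gensI a 2 m"
      then have "g \<in> J"
      proof
        assume "g \<in> gensI a 1 (m - 1)"
        then obtain t where g: "g = (\<Prod>j<a. pvar (t j))" and t0: "1 \<le> t 0" and ta: "t (a - 1) \<le> m - 1"
          and sp: "\<And>j. j + 1 < a \<Longrightarrow> t j + 2 \<le> t (j + 1)"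
          unfolding gensI_mem by blast
        have aS: "a = Suc (a - 1)" using a3 by simp
        have ge: "g = pvar (t 0) * (\<Prod>j<a - 1. pvar (t (Suc j)))"
          unfolding g by (subst aS) (rule prod.lessThan_Suc_shift)
        have "(\<Prod>j<a - 1. pvar (t (Suc j))) \<in> (gensI (a - 1) 2 (m - 1) :: 'k mpoly set)"
          unfolding gensI_mem
        proof (intro exI conjI allI impI)
          show "2 \<le> t (Suc 0)" using sp[of 0] t0 a3 by simp
          show "t (Suc (a - 1 - 1)) \<le> m - 1" using ta a3 by (simp add: Suc_diff_Suc)
          fix j assume "j + 1 < a - 1" then show "t (Suc j) + 2 \<le> t (Suc (j + 1))" using sp[of "Suc j"] by simp
        qed simp
        moreover have "pvar (t 0) \<in> R"
        proof -
          have "t 0 \<le> t (a - 1)" using spaced_mono[of a t 0 "a - 1", OF sp] a3 by simp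
          then show ?thesis using ta xR[of "t 0"] unfolding x_def by simp
        qed
        ultimately show "g \<in> J" unfolding ge J_def by (intro gen_ideal_gen) auto
      next
        assume "g \<in> gensI a 2 m"
        then obtain t where g: "g = (\<Prod>j<a. pvar (t j))" and t0: "2 \<le> t 0" and ta: "t (a - 1) \<le> m"
          and sp: "\<And>j. j + 1 < a \<Longrightarrow> t j + 2 \<le> t (j + 1)"
          unfolding gensI_mem by blast
        have aS: "a = Suc (a - 1)" using a3 by simp
        have ge: "g = pvar (t (a - 1)) * (\<Prod>j<a - 1. pvar (t j))"
          unfolding g by (subst aS) (simp add: prod.lessThan_Suc mult.commute)
        have "(\<Prod>j<a - 1. pvar (t j)) \<in> (gensI (a - 1) 2 (m - 1) :: 'k mpoly set)"
          unfolding gensI_mem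
        proof (intro exI conjI allI impI)
          have "t (a - 1 - 1) + 2 \<le> t (a - 1 - 1 + 1)" using a3 by (intro sp) simp
          moreover have "a - 1 - 1 + 1 = a - 1" using a3 by simp
          ultimately have "t (a - 1 - 1) + 2 \<le> t (a - 1)" by simp
          then show "t (a - 1 - 1) \<le> m - 1" using ta a3 by simp
          fix j assume "j + 1 < a - 1" then show "t j + 2 \<le> t (j + 1)" using sp[of j] by simp
        qed (use t0 in simp_all)
        moreover have "pvar (t (a - 1)) \<in> R" using ta xR unfolding x_def by simp
        ultimately show "g \<in> J" unfolding ge J_def by (intro gen_ideal_gen) auto
      qed
      then show "g \<in> gen_ideal R (gensI (a - 1) 2 (m - 1) \<union> (\<lambda>g. z * g) ` gensI (a - 2) 3 (m - 2))"
        unfolding J_def .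
    qed
  qed
  have P2: "\<forall>v \<in> idealI m (a - 1) 2 (m - 1). \<forall>w \<in> idealI m (a - 2) 3 (m - 2). x 1 * x m * v * w \<in> I"
  proof (intro ballI)
    fix v w :: "'k mpoly" assume v: "v \<in> idealI m (a - 1) 2 (m - 1)" and w: "w \<in> idealI m (a - 2) 3 (m - 2)"
    have gh: "\<And>g h. g \<in> gensI (a - 1) 2 (m - 1) \<Longrightarrow> h \<in> gensI (a - 2) 3 (m - 2) \<Longrightarrow>
      pvar 1 * pvar m * g * h \<in> gen_ideal (polyR m) (gensI a 1 (m - 1) \<union> gensI a 2 m :: 'k mpoly set)"
      by (rule part2_gen[OF a3 am])
    show "x 1 * x m * v * w \<in> I"
      unfolding I_def R_def x_def
      by (rule gen_ideal_bilin[OF polyR_mult gh v[unfolded idealI_def] w[unfolded idealI_def]])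
  qed
  have P3: "\<forall>b b1 b2. b \<in> J \<and> regular_mod R I b \<and> b1 \<in> R \<and> b2 \<in> R
           \<and> (\<exists>v \<in> idealI m (a - 1) 2 (m - 1). b1 - v \<in> I)
           \<and> (\<exists>v \<in> idealI m (a - 2) 3 (m - 2). b2 - v \<in> I)
           \<and> b - (b1 + z * b2) \<in> I \<longrightarrow>
         (\<forall>w \<in> idealI m (a - 2) 3 (m - 2).
            tq_eq R I (tq_mult (tq_frac (b2 * x 1 * x m) b) (tq_of (z * w)))
                      (tq_of (w * x 1 * x m)))"
  proof (intro allI impI ballI)
    fix b b1 b2 w :: "'k mpoly"
    assume H: "b \<in> J \<and> regular_mod R I b \<and> b1 \<in> R \<and> b2 \<in> R
           \<and> (\<exists>v \<in> idealI m (a - 1) 2 (m - 1). b1 - v \<in> I)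
           \<and> (\<exists>v \<in> idealI m (a - 2) 3 (m - 2). b2 - v \<in> I)
           \<and> b - (b1 + z * b2) \<in> I"
      and w: "w \<in> idealI m (a - 2) 3 (m - 2)"
    obtain v where v: "v \<in> idealI m (a - 1) 2 (m - 1)" and e2: "b1 - v \<in> I" using H by blast
    have e1: "b - (b1 + z * b2) \<in> I" using H by blast
    have gR: "\<And>g. g \<in> gensI (a - 2) 3 (m - 2) \<Longrightarrow> g \<in> (polyR m :: 'k mpoly set)"
      using gensI_polyR[of "m - 2" m] by simp
    have wR: "w \<in> R" unfolding R_def
      by (rule gen_ideal_sub[of "polyR m" "gensI (a - 2) 3 (m - 2)"])
         (auto intro: polyR_mult polyR_add polyR_zero gR w[unfolded idealI_def])
    define X where "X = w * x 1 * x m"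
    have "1 \<le> m" using am a3 by linarith
    then have XR: "- X \<in> R" unfolding X_def using wR xR[of 1] xR[of m] by (intro Rneg Rmult) auto
    have m1R: "- 1 \<in> R" using Rneg R1 by blast
    have D: "b2 * x 1 * x m * (z * w) * 1 - w * x 1 * x m * (b * 1)
       = (- X) * (b - (b1 + z * b2)) + ((- X) * (b1 - v) + (- 1) * (x 1 * x m * v * w))"
      unfolding X_def by (simp add: algebra_simps)
    have "(- X) * (b - (b1 + z * b2)) + ((- X) * (b1 - v) + (- 1) * (x 1 * x m * v * w)) \<in> I"
    proof -
      have i1: "(- X) * (b - (b1 + z * b2)) \<in> I" unfolding I_def by (rule gen_ideal_mult, fact Rmult, fact XR, fact e1[unfolded I_def])
      have i2: "(- X) * (b1 - v) \<in> I" unfolding I_def by (rule gen_ideal_mult, fact Rmult, fact XR, fact e2[unfolded I_def])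
      have e3: "x 1 * x m * v * w \<in> I" using P2 v w by blast
      have i3: "(- 1) * (x 1 * x m * v * w) \<in> I" unfolding I_def by (rule gen_ideal_mult, fact Rmult, fact m1R, fact e3[unfolded I_def])
      show ?thesis using i1 i2 i3 unfolding I_def by (intro gen_ideal_add)
    qed
    then have "1 * (b2 * x 1 * x m * (z * w) * 1 - w * x 1 * x m * (b * 1)) \<in> I" using D by simp
    moreover have "regular_mod R I 1" unfolding regular_mod_def using R1 by simp
    ultimately show "tq_eq R I (tq_mult (tq_frac (b2 * x 1 * x m) b) (tq_of (z * w))) (tq_of (w * x 1 * x m))"
      unfolding tq_eq_def tq_mult_def tq_frac_def tq_of_def by auto
  qed
  show ?thesis using P1 P2 P3 by blast
qed

end
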